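(* Let $T$ be a complete first-order theory with a formula $\varphi_*(x,y)$ (written $xRy$) such that $T\models\exists y\forall x\,\neg(xRy)$ and $T\models\forall x\forall y\exists y_1\forall x_1\,[x_1Ry_1\leftrightarrow(x_1Ry\vee x_1=x)]$. Then for every singular cardinal $\kappa$, every $\kappa$-saturated model of $T$ is $\kappa^+$-saturated; hence $T$ has no exactly $\kappa$-saturated model for singular $\kappa$. Moreover, such theories exist which are independent (have the independence property): e.g. for any infinite structure $M$ and a new binary relation symbol $R$, expanding $M$ by $R=\{(a,b):a\in u_b\}$ where $\langle u_b:b\in M\rangle$ lists all finite subsets of $M$ yields such a theory $\mathrm{Th}(M,R)$.
   Context: A model is exactly $\kappa$-saturated if it is $\kappa$-saturated but not $\kappa^+$-saturated. $T$ is independent if some formula $\varphi(\bar x,\bar y)$ has the independence property in models of $T$. *)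

theory Defs
  imports Main
begin

datatype 'f trm = Var nat | Fn 'f "'f trm list"

datatype ('f, 'r) fm =
    Eq "'f trm" "'f trm"
  | Rel 'r "'f trm list"
  | Neg "('f, 'r) fm"
  | Conj "('f, 'r) fm" "('f, 'r) fm"
  | Ex nat "('f, 'r) fm"

text \<open>A language is given by the arities of its function symbols (constants have arity 0)
  and of its relation symbols.\<close>
type_synonym ('f, 'r) lang = "('f \<Rightarrow> nat) \<times> ('r \<Rightarrow> nat)"

fun twf :: "('f \<Rightarrow> nat) \<Rightarrow> 'f trm \<Rightarrow> bool" where
  "twf fa (Var n) = True"
| "twf fa (Fn f ts) = (length ts = fa f \<and> (\<forall>t\<in>set ts. twf fa t))"

fun tvars :: "'f trm \<Rightarrow> nat set" where
  "tvars (Var n) = {n}"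
| "tvars (Fn f ts) = (\<Union>t\<in>set ts. tvars t)"

fun fwf :: "('f, 'r) lang \<Rightarrow> ('f, 'r) fm \<Rightarrow> bool" where
  "fwf L (Eq s t) = (twf (fst L) s \<and> twf (fst L) t)"
| "fwf L (Rel r ts) = (length ts = snd L r \<and> (\<forall>t\<in>set ts. twf (fst L) t))"
| "fwf L (Neg \<phi>) = fwf L \<phi>"
| "fwf L (Conj \<phi> \<psi>) = (fwf L \<phi> \<and> fwf L \<psi>)"
| "fwf L (Ex n \<phi>) = fwf L \<phi>"

fun FV :: "('f, 'r) fm \<Rightarrow> nat set" where
  "FV (Eq s t) = tvars s \<union> tvars t"
| "FV (Rel r ts) = (\<Union>t\<in>set ts. tvars t)"
| "FV (Neg \<phi>) = FV \<phi>"
| "FV (Conj \<phi> \<psi>) = FV \<phi> \<union> FV \<psi>"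
| "FV (Ex n \<phi>) = FV \<phi> - {n}"

definition sentence :: "('f, 'r) lang \<Rightarrow> ('f, 'r) fm \<Rightarrow> bool" where
  "sentence L \<sigma> \<longleftrightarrow> fwf L \<sigma> \<and> FV \<sigma> = {}"

record ('a, 'f, 'r) struct =
  dom :: "'a set"
  fn  :: "'f \<Rightarrow> 'a list \<Rightarrow> 'a"
  rl  :: "'r \<Rightarrow> 'a list \<Rightarrow> bool"

definition is_struct :: "('f, 'r) lang \<Rightarrow> ('a, 'f, 'r) struct \<Rightarrow> bool" where
  "is_struct L M \<longleftrightarrow> dom M \<noteq> {} \<and>
     (\<forall>f xs. length xs = fst L f \<and> set xs \<subseteq> dom M \<longrightarrow> fn M f xs \<in> dom M)"

fun teval :: "('a, 'f, 'r) struct \<Rightarrow> (nat \<Rightarrow> 'a) \<Rightarrow> 'f trm \<Rightarrow> 'a" where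
  "teval M e (Var n) = e n"
| "teval M e (Fn f ts) = fn M f (map (teval M e) ts)"

fun eval :: "('a, 'f, 'r) struct \<Rightarrow> (nat \<Rightarrow> 'a) \<Rightarrow> ('f, 'r) fm \<Rightarrow> bool" where
  "eval M e (Eq s t) = (teval M e s = teval M e t)"
| "eval M e (Rel r ts) = rl M r (map (teval M e) ts)"
| "eval M e (Neg \<phi>) = (\<not> eval M e \<phi>)"
| "eval M e (Conj \<phi> \<psi>) = (eval M e \<phi> \<and> eval M e \<psi>)"
| "eval M e (Ex n \<phi>) = (\<exists>a\<in>dom M. eval M (e(n := a)) \<phi>)"

text \<open>Truth of a sentence (the assignment is irrelevant for sentences).\<close>
definition models :: "('a, 'f, 'r) struct \<Rightarrow> ('f, 'r) fm \<Rightarrow> bool" where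
  "models M \<sigma> \<longleftrightarrow> (\<forall>e. eval M e \<sigma>)"

definition is_model :: "('f, 'r) lang \<Rightarrow> ('a, 'f, 'r) struct \<Rightarrow> ('f, 'r) fm set \<Rightarrow> bool" where
  "is_model L M T \<longleftrightarrow> is_struct L M \<and> (\<forall>\<sigma>\<in>T. models M \<sigma>)"

text \<open>Complete theory: a set of sentences, satisfiable (in a structure with carrier type 'a), containing, for every sentence,
  either it or its negation (i.e. a maximal consistent theory).\<close>
definition complete_theory :: "'a itself \<Rightarrow> ('f, 'r) lang \<Rightarrow> ('f, 'r) fm set \<Rightarrow> bool" where
  "complete_theory (_ :: 'a itself) L T \<longleftrightarrow> (\<forall>\<sigma>\<in>T. sentence L \<sigma>) \<and>
     (\<exists>M :: ('a, 'f, 'r) struct. is_model L M T) \<and>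
     (\<forall>\<sigma>. sentence L \<sigma> \<longrightarrow> \<sigma> \<in> T \<or> Neg \<sigma> \<in> T)"

definition Th :: "('f, 'r) lang \<Rightarrow> ('a, 'f, 'r) struct \<Rightarrow> ('f, 'r) fm set" where
  "Th L M = {\<sigma>. sentence L \<sigma> \<and> models M \<sigma>}"

text \<open>A formula over A in the free variable 0: a pair of a formula and an assignment
  sending all other free variables into A.\<close>
definition over :: "('f, 'r) lang \<Rightarrow> 'a set \<Rightarrow> (('f, 'r) fm \<times> (nat \<Rightarrow> 'a)) set" where
  "over L A = {(\<phi>, e). fwf L \<phi> \<and> e ` (FV \<phi> - {0}) \<subseteq> A}"

definition realizes :: "('a, 'f, 'r) struct \<Rightarrow> 'a \<Rightarrow> (('f, 'r) fm \<times> (nat \<Rightarrow> 'a)) set \<Rightarrow> bool" where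
  "realizes M b p \<longleftrightarrow> b \<in> dom M \<and> (\<forall>(\<phi>, e)\<in>p. eval M (e(0 := b)) \<phi>)"

definition is_type_over :: "('f, 'r) lang \<Rightarrow> ('a, 'f, 'r) struct \<Rightarrow> 'a set
     \<Rightarrow> (('f, 'r) fm \<times> (nat \<Rightarrow> 'a)) set \<Rightarrow> bool" where
  "is_type_over L M A p \<longleftrightarrow> p \<subseteq> over L A \<and>
     (\<forall>q. finite q \<and> q \<subseteq> p \<longrightarrow> (\<exists>b. realizes M b q))"

text \<open>\<kappa>-saturation; the cardinal \<kappa> is a cardinal-order relation on some type.\<close>
definition saturated :: "('f, 'r) lang \<Rightarrow> ('a, 'f, 'r) struct \<Rightarrow> 'k rel \<Rightarrow> bool" where
  "saturated L M \<kappa> \<longleftrightarrow> (\<forall>A. A \<subseteq> dom M \<and> (card_of A, \<kappa>) \<in> ordLess \<longrightarrow>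
     (\<forall>p. is_type_over L M A p \<longrightarrow> (\<exists>b. realizes M b p)))"

definition singular_cardinal :: "'k rel \<Rightarrow> bool" where
  "singular_cardinal \<kappa> \<longleftrightarrow> Card_order \<kappa> \<and> \<not> finite (Field \<kappa>) \<and> \<not> regularCard \<kappa>"

text \<open>Shelah's definition: \<phi>(x1..xk; y1..ym) (x-variables xs, y-variables ys, distinct,
  containing all free variables) has the independence property in M if for every n there are
  tuples a0..an-1 such that for every w \<subseteq> n there is b with \<phi>(al, b) iff l \<in> w.\<close>
definition has_IP :: "('f, 'r) lang \<Rightarrow> ('a, 'f, 'r) struct \<Rightarrow> ('f, 'r) fm
     \<Rightarrow> nat list \<Rightarrow> nat list \<Rightarrow> bool" where
  "has_IP L M \<phi> xs ys \<longleftrightarrow> fwf L \<phi> \<and> distinct (xs @ ys) \<and> FV \<phi> \<subseteq> set (xs @ ys) \<and>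
     (\<forall>n. \<exists>a :: nat \<Rightarrow> nat \<Rightarrow> 'a. (\<forall>l<n. \<forall>j. a l j \<in> dom M) \<and>
        (\<forall>w \<subseteq> {..<n}. \<exists>b :: nat \<Rightarrow> 'a. (\<forall>j. b j \<in> dom M) \<and>
           (\<forall>l<n. eval M (\<lambda>v. if v \<in> set xs then a l v else b v) \<phi> \<longleftrightarrow> l \<in> w)))"

definition independent :: "('f, 'r) lang \<Rightarrow> ('a, 'f, 'r) struct \<Rightarrow> ('f, 'r) fm set \<Rightarrow> bool" where
  "independent L M T \<longleftrightarrow> is_model L M T \<and> (\<exists>\<phi> xs ys. has_IP L M \<phi> xs ys)"

section \<open>The two axioms on \<phi>*(x,y) = xRy (x = variable 0, y = variable 1)\<close>

definition asg :: "'a \<Rightarrow> 'a \<Rightarrow> nat \<Rightarrow> 'a" where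
  "asg x y = (\<lambda>v. if v = 0 then x else y)"

definition ax_empty :: "('a, 'f, 'r) struct \<Rightarrow> ('f, 'r) fm \<Rightarrow> bool" where
  "ax_empty N \<phi> \<longleftrightarrow> (\<exists>y\<in>dom N. \<forall>x\<in>dom N. \<not> eval N (asg x y) \<phi>)"

definition ax_add :: "('a, 'f, 'r) struct \<Rightarrow> ('f, 'r) fm \<Rightarrow> bool" where
  "ax_add N \<phi> \<longleftrightarrow> (\<forall>x\<in>dom N. \<forall>y\<in>dom N. \<exists>y1\<in>dom N. \<forall>x1\<in>dom N.
      eval N (asg x1 y1) \<phi> \<longleftrightarrow> (eval N (asg x1 y) \<phi> \<or> x1 = x))"

definition expand_lang :: "('f, 'r) lang \<Rightarrow> ('f, 'r option) lang" where
  "expand_lang L = (fst L, (\<lambda>r. case r of None \<Rightarrow> 2 | Some r' \<Rightarrow> snd L r'))"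

definition expand :: "('a, 'f, 'r) struct \<Rightarrow> ('a \<Rightarrow> 'a set) \<Rightarrow> ('a, 'f, 'r option) struct" where
  "expand M u = \<lparr>dom = dom M, fn = fn M,
     rl = (\<lambda>r xs. case r of
              None \<Rightarrow> (case xs of [a, b] \<Rightarrow> a \<in> u b | _ \<Rightarrow> False)
            | Some r' \<Rightarrow> rl M r' xs)\<rparr>"

end

theory Submission
  imports Defs
begin
unbundle cardinal_syntax

lemma teval_cong: "(\<forall>v\<in>tvars t. e v = e' v) \<Longrightarrow> teval M e t = teval M e' t"
proof (induction t)
  case (Fn f ts)
  then have "map (teval M e) ts = map (teval M e') ts" by (intro map_cong) auto
  then show ?case by (metis teval.simps(2))
qed simp

lemma eval_cong: "(\<forall>v\<in>FV \<phi>. e v = e' v) \<Longrightarrow> eval M e \<phi> = eval M e' \<phi>"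
proof (induction \<phi> arbitrary: e e')
  case (Eq s t) then show ?case using teval_cong[of s e e' M] teval_cong[of t e e' M] by auto
next
  case (Rel r ts)
  have "map (teval M e) ts = map (teval M e') ts"
    using Rel by (intro map_cong) (auto intro!: teval_cong)
  then show ?case by (metis eval.simps(2))
next
  case (Ex n \<phi>)
  have "\<And>a. eval M (e(n:=a)) \<phi> = eval M (e'(n:=a)) \<phi>" using Ex.IH Ex.prems by auto
  then show ?case by simp
next
  case (Conj a b)
  then show ?case by (metis UnCI eval.simps(4) FV.simps(4))
qed auto

lemma finite_tvars: "finite (tvars t)"
  by (induction t) auto

lemma finite_FV: "finite (FV \<phi>)"
  by (induction \<phi>) (auto simp: finite_tvars)

definition inR :: "('f,'r) fm \<Rightarrow> ('f,'r) fm" where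
  "inR ps = Ex 2 (Conj (Eq (Var 2) (Var 0)) (Ex 1 (Conj (Eq (Var 1) (Var 2)) (Ex 0 (Conj (Eq (Var 0) (Var 3)) ps)))))"

definition allR :: "('f,'r) fm \<Rightarrow> nat \<Rightarrow> ('f,'r) fm \<Rightarrow> ('f,'r) fm" where
  "allR ps w \<phi> = Ex w (Conj (Eq (Var w) (Var 0)) (Neg (Ex 0 (Conj (Ex 1 (Conj (Eq (Var 1) (Var w)) ps)) (Neg \<phi>)))))"

lemma eval_ps: "FV ps \<subseteq> {0,1} \<Longrightarrow> e 0 = x \<Longrightarrow> e 1 = y \<Longrightarrow> eval M e ps = eval M (asg x y) ps"
  by (rule eval_cong) (auto simp: asg_def)

lemma eval_inR: assumes "FV ps \<subseteq> {0,1}" "e 0 \<in> dom M" "e 3 \<in> dom M"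
  shows "eval M e (inR ps) = eval M (asg (e 3) (e 0)) ps"
proof -
  have "eval M (e(2 := e 0, 1 := e 0, 0 := e 3)) ps = eval M (asg (e 3) (e 0)) ps"
    using assms by (intro eval_ps) auto
  then show ?thesis using assms unfolding inR_def by auto
qed

lemma FV_inR: "FV ps \<subseteq> {0,1} \<Longrightarrow> FV (inR ps) \<subseteq> {0,3}"
  unfolding inR_def by auto

lemma eval_allR: assumes "FV ps \<subseteq> {0,1}" "e 0 \<in> dom M" "w \<notin> FV \<phi>" "w \<noteq> 0" "w \<noteq> 1"
  shows "eval M e (allR ps w \<phi>) = (\<forall>x\<in>dom M. eval M (asg x (e 0)) ps \<longrightarrow> eval M (e(0:=x)) \<phi>)"
proof -
  have 1: "eval M (e(w := e 0, 0 := x, 1 := e 0)) ps = eval M (asg x (e 0)) ps" for x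
    using assms by (intro eval_ps) auto
  have 2: "eval M (e(w := e 0, 0 := x)) \<phi> = eval M (e(0:=x)) \<phi>" for x
    using assms by (intro eval_cong) auto
  show ?thesis using assms 1 2 unfolding allR_def by auto
qed

lemma FV_allR: "FV ps \<subseteq> {0,1} \<Longrightarrow> FV (allR ps w \<phi>) \<subseteq> {0} \<union> (FV \<phi> - {0})"
  unfolding allR_def by auto

lemma fwf_allR: "fwf L ps \<Longrightarrow> fwf L \<phi> \<Longrightarrow> fwf L (allR ps w \<phi>)"
  unfolding allR_def by auto
lemma fwf_inR: "fwf L ps \<Longrightarrow> fwf L (inR ps)"
  unfolding inR_def by auto


lemma code_finite:
  assumes "ax_empty M ps" "ax_add M ps"
  shows "finite F \<Longrightarrow> F \<subseteq> dom M \<Longrightarrow> \<exists>y\<in>dom M. \<forall>x\<in>dom M. eval M (asg x y) ps \<longleftrightarrow> x \<in> F"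
proof (induction F rule: finite_induct)
  case empty then show ?case using assms(1) unfolding ax_empty_def by auto
next
  case (insert a F)
  then obtain y where y: "y \<in> dom M" "\<forall>x\<in>dom M. eval M (asg x y) ps \<longleftrightarrow> x \<in> F" by auto
  obtain y1 where "y1 \<in> dom M" "\<forall>x1\<in>dom M. eval M (asg x1 y1) ps \<longleftrightarrow> (eval M (asg x1 y) ps \<or> x1 = a)"
    using assms(2) insert.prems y(1) unfolding ax_add_def by blast
  then show ?case using y by auto
qed

definition fw :: "('f,'r) fm \<Rightarrow> nat" where
  "fw \<phi> = (SOME w. w \<notin> FV \<phi> \<and> w \<noteq> 0 \<and> w \<noteq> 1)"

lemma fw: "fw \<phi> \<notin> FV \<phi> \<and> fw \<phi> \<noteq> 0 \<and> fw \<phi> \<noteq> 1"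
proof -
  have "finite (FV \<phi> \<union> {0,1})" by (simp add: finite_FV)
  then obtain w where "w \<notin> FV \<phi> \<union> {0,1}" using ex_new_if_finite[OF infinite_UNIV_nat] by blast
  then have "\<exists>w. w \<notin> FV \<phi> \<and> w \<noteq> 0 \<and> w \<noteq> 1" by auto
  then show ?thesis unfolding fw_def by (rule someI_ex)
qed

lemma over_mono: "A \<subseteq> B \<Longrightarrow> over L A \<subseteq> over L B"
  unfolding over_def by auto

lemma realize_main:
  fixes \<kappa> :: "'k rel" and Aj :: "'i \<Rightarrow> 'a set" and I :: "'i set"
    and M :: "('a,'f,'r) struct"
  assumes sat: "saturated L M \<kappa>" and card: "Card_order \<kappa>" "infinite (Field \<kappa>)"
  and I: "|I| <o \<kappa>"
  and Aj: "\<forall>j\<in>I. Aj j \<subseteq> dom M \<and> |Aj j| <o \<kappa>"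
  and dir: "\<forall>F. finite F \<and> F \<subseteq> A \<longrightarrow> (\<exists>j\<in>I. F \<subseteq> Aj j)"
  and dir2: "\<forall>J. finite J \<and> J \<subseteq> I \<longrightarrow> (\<exists>i\<in>I. \<forall>j\<in>J. Aj j \<subseteq> Aj i)"
  and code: "\<forall>F. finite F \<and> F \<subseteq> dom M \<longrightarrow> (\<exists>y\<in>dom M. \<forall>x\<in>dom M. eval M (asg x y) ps \<longleftrightarrow> x \<in> F)"
  and ps: "fwf L ps" "FV ps \<subseteq> {0,1}"
  and tp: "is_type_over L M A p"
  shows "\<exists>b. realizes M b p"
proof -
  define pj where "pj j = p \<inter> over L (Aj j)" for j
  have "\<exists>b. realizes M b (pj j)" if "j \<in> I" for j
  proof -
    have "is_type_over L M (Aj j) (pj j)"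
      using tp unfolding is_type_over_def pj_def by blast
    then show ?thesis using sat Aj that unfolding saturated_def by blast
  qed
  then obtain bb where bb: "\<And>j. j \<in> I \<Longrightarrow> realizes M (bb j) (pj j)" by metis
  have bbdom: "bb j \<in> dom M" if "j \<in> I" for j using bb[OF that] unfolding realizes_def by auto
  define qj where "qj j = (\<lambda>(\<phi>,e). (allR ps (fw \<phi>) \<phi>, e)) ` pj j
      \<union> (\<lambda>i. (inR ps, \<lambda>v. bb i)) ` {i\<in>I. Aj j \<subseteq> Aj i}" for j
  have "\<exists>y. realizes M y (qj j)" if j: "j \<in> I" for j
  proof -
    have sub: "qj j \<subseteq> over L (Aj j \<union> bb ` I)"
    proof
      fix z assume "z \<in> qj j"
      then consider (a) \<phi> e where "(\<phi>,e) \<in> pj j" "z = (allR ps (fw \<phi>) \<phi>, e)"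
        | (b) i where "i \<in> I" "z = (inR ps, \<lambda>v. bb i)"
        unfolding qj_def by auto
      then show "z \<in> over L (Aj j \<union> bb ` I)"
      proof cases
        case a
        then have "fwf L \<phi>" "e ` (FV \<phi> - {0}) \<subseteq> Aj j" unfolding pj_def over_def by auto
        then show ?thesis using a FV_allR[OF ps(2), of "fw \<phi>" \<phi>] fwf_allR[OF ps(1)]
          unfolding over_def by auto
      next
        case b
        then show ?thesis using fwf_inR[OF ps(1)] unfolding over_def by auto
      qed
    qed
    have fin: "\<exists>y. realizes M y q" if q: "finite q" "q \<subseteq> qj j" for q
    proof -
      define F where "F = {bb i | i. i \<in> I \<and> Aj j \<subseteq> Aj i \<and> (inR ps, \<lambda>v. bb i) \<in> q}"
      have "F \<subseteq> (\<lambda>(\<psi>,e). e 3) ` q" unfolding F_def by force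
      then have "finite F" using q(1) finite_subset by blast
      moreover have "F \<subseteq> dom M" unfolding F_def using bbdom by auto
      ultimately obtain y where y: "y \<in> dom M" "\<forall>x\<in>dom M. eval M (asg x y) ps \<longleftrightarrow> x \<in> F"
        using code by blast
      have "eval M (e(0 := y)) \<psi>" if z: "(\<psi>, e) \<in> q" for \<psi> e
      proof -
        from z q(2) consider (a) \<phi> where "(\<phi>,e) \<in> pj j" "\<psi> = allR ps (fw \<phi>) \<phi>"
          | (b) i where "i \<in> I" "Aj j \<subseteq> Aj i" "e = (\<lambda>v. bb i)" "\<psi> = inR ps"
          unfolding qj_def by auto
        then show ?thesis
        proof cases
          case a
          have "eval M ((e(0 := y))(0 := x)) \<phi>" if x: "x \<in> dom M" "eval M (asg x y) ps" for x
          proof -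
            from x y obtain i where i: "i \<in> I" "Aj j \<subseteq> Aj i" "x = bb i" unfolding F_def by auto
            have "(\<phi>, e) \<in> pj i" using a(1) over_mono[OF i(2), of L] unfolding pj_def by blast
            then show ?thesis using bb[OF i(1)] i(3) unfolding realizes_def by auto
          qed
          then show ?thesis using a(2) eval_allR[OF ps(2), of "e(0:=y)" M "fw \<phi>" \<phi>] fw[of \<phi>] y(1)
            by auto
        next
          case b
          have "bb i \<in> F" using b z unfolding F_def by auto
          then have "eval M (asg (bb i) y) ps" using y bbdom[OF b(1)] by auto
          then show ?thesis using b eval_inR[OF ps(2), of "e(0:=y)" M] y(1) bbdom[OF b(1)] by auto
        qed
      qed
      then show ?thesis using y(1) unfolding realizes_def by auto
    qed
    have "Aj j \<union> bb ` I \<subseteq> dom M" using Aj j bbdom by auto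
    moreover have "|Aj j \<union> bb ` I| <o \<kappa>"
      using card_of_Un_ordLess_infinite_Field[OF card(2) card(1)] Aj j
        ordLeq_ordLess_trans[OF card_of_image I] by blast
    moreover have "is_type_over L M (Aj j \<union> bb ` I) (qj j)"
      using sub fin unfolding is_type_over_def by blast
    ultimately show ?thesis using sat unfolding saturated_def by blast
  qed
  then obtain yy where yy: "\<And>j. j \<in> I \<Longrightarrow> realizes M (yy j) (qj j)" by metis
  have yydom: "yy j \<in> dom M" if "j \<in> I" for j using yy[OF that] unfolding realizes_def by auto
  define r where "r = (\<lambda>j. (ps, \<lambda>v::nat. yy j)) ` I"
  have "is_type_over L M (yy ` I) r"
    unfolding is_type_over_def
  proof safe
    show "z \<in> over L (yy ` I)" if "z \<in> r" for z
      using that ps unfolding r_def over_def by auto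
  next
    fix q assume q: "finite q" "q \<subseteq> r"
    then obtain J where J: "J \<subseteq> I" "finite J" "q = (\<lambda>j. (ps, \<lambda>v::nat. yy j)) ` J"
      unfolding r_def using finite_subset_image by metis
    then obtain i where i: "i \<in> I" "\<forall>j\<in>J. Aj j \<subseteq> Aj i" using dir2 by blast
    have "eval M ((\<lambda>v. yy j)(0 := bb i)) ps" if "j \<in> J" for j
    proof -
      have jI: "j \<in> I" using J that by auto
      have "(inR ps, \<lambda>v. bb i) \<in> qj j" using i that unfolding qj_def by auto
      then have "eval M ((\<lambda>v. bb i)(0 := yy j)) (inR ps)" using yy[OF jI] unfolding realizes_def by auto
      then have "eval M (asg (bb i) (yy j)) ps"
        using eval_inR[OF ps(2), of "(\<lambda>v. bb i)(0 := yy j)" M] yydom[OF jI] bbdom[OF i(1)] by auto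
      then show ?thesis using eval_ps[OF ps(2), of "(\<lambda>v. yy j)(0 := bb i)" "bb i" "yy j" M] by auto
    qed
    then show "\<exists>b. realizes M b q" using J(3) bbdom[OF i(1)] unfolding realizes_def by auto
  qed
  moreover have "yy ` I \<subseteq> dom M" using yydom by auto
  moreover have "|yy ` I| <o \<kappa>" using ordLeq_ordLess_trans[OF card_of_image I] .
  ultimately obtain x where x: "realizes M x r" using sat unfolding saturated_def by blast
  have "eval M (e(0 := x)) \<phi>" if pe: "(\<phi>, e) \<in> p" for \<phi> e
  proof -
    have "e ` (FV \<phi> - {0}) \<subseteq> A" using pe tp unfolding is_type_over_def over_def by auto
    moreover have "finite (e ` (FV \<phi> - {0}))" using finite_FV[of \<phi>] by simp
    ultimately obtain j where j: "j \<in> I" "e ` (FV \<phi> - {0}) \<subseteq> Aj j" using dir by meson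
    then have "(\<phi>, e) \<in> pj j" using pe tp unfolding pj_def is_type_over_def over_def by auto
    then have "(allR ps (fw \<phi>) \<phi>, e) \<in> qj j" unfolding qj_def by force
    then have 1: "eval M (e(0 := yy j)) (allR ps (fw \<phi>) \<phi>)" using yy[OF j(1)] unfolding realizes_def by auto
    have "(ps, \<lambda>v. yy j) \<in> r" using j unfolding r_def by auto
    then have "eval M ((\<lambda>v. yy j)(0 := x)) ps" using x unfolding realizes_def by auto
    then have 2: "eval M (asg x (yy j)) ps" using eval_ps[OF ps(2), of "(\<lambda>v. yy j)(0 := x)" x "yy j" M] by auto
    have "x \<in> dom M" using x unfolding realizes_def by auto
    then show ?thesis using 1 2 eval_allR[OF ps(2), of "e(0:=yy j)" M "fw \<phi>" \<phi>] fw[of \<phi>] yydom[OF j(1)]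
      by auto
  qed
  then show ?thesis using x unfolding realizes_def by auto
qed


lemma LO_of_card: "Card_order \<kappa> \<Longrightarrow> Linear_order \<kappa>"
  using card_order_on_well_order_on[of "Field \<kappa>" \<kappa>] unfolding well_order_on_def by blast

lemma max_underS:
  assumes "Card_order \<kappa>" "a \<in> Field \<kappa>" "b \<in> Field \<kappa>"
  shows "underS \<kappa> a \<subseteq> underS \<kappa> b \<or> underS \<kappa> b \<subseteq> underS \<kappa> a"
proof -
  have LO: "Linear_order \<kappa>" using LO_of_card[OF assms(1)] .
  then have "(a,b) \<in> \<kappa> \<or> (b,a) \<in> \<kappa>"
    using Linear_order_in_diff_Id[OF LO assms(2,3)] by blast
  then show ?thesis using underS_incl_iff[OF LO assms(2,3)] underS_incl_iff[OF LO assms(3,2)] by blast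
qed

lemma part1:
  fixes \<kappa> :: "'k rel" and M :: "('a,'f,'r) struct"
  assumes sing: "singular_cardinal \<kappa>"
    and ax: "ax_empty M ps" "ax_add M ps" and ps: "fwf L ps" "FV ps \<subseteq> {0,1}"
    and sat: "saturated L M \<kappa>"
  shows "saturated L M (cardSuc \<kappa>)"
  unfolding saturated_def
proof (intro allI impI)
  fix A p assume A: "A \<subseteq> dom M \<and> |A| <o cardSuc \<kappa>" and tp: "is_type_over L M A p"
  have card: "Card_order \<kappa>" "infinite (Field \<kappa>)" "\<not> regularCard \<kappa>"
    using sing unfolding singular_cardinal_def by auto
  have "|A| \<le>o \<kappa>" using A cardSuc_ordLeq_ordLess[OF card(1) card_of_Card_order] by blast
  then have "|A| \<le>o |Field \<kappa>|"
    using ordLeq_ordIso_trans[OF _ ordIso_symmetric[OF card_of_Field_ordIso[OF card(1)]]] by blast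
  then obtain f where f: "inj_on f A" "f ` A \<subseteq> Field \<kappa>" using card_of_ordLeq[of A "Field \<kappa>"] by blast
  obtain K where K: "K \<subseteq> Field \<kappa>" "cofinal K \<kappa>" "\<not> |K| =o \<kappa>"
    using card(3) unfolding regularCard_def by blast
  have "|K| \<le>o \<kappa>" using ordLeq_ordIso_trans[OF card_of_mono1[OF K(1)] card_of_Field_ordIso[OF card(1)]] .
  then have KI: "|K| <o \<kappa>" using K(3) ordLeq_iff_ordLess_or_ordIso[of "|K|" \<kappa>] by blast
  define Aj where "Aj k = {a\<in>A. f a \<in> underS \<kappa> k}" for k
  have Aj: "\<forall>j\<in>K. Aj j \<subseteq> dom M \<and> |Aj j| <o \<kappa>"
  proof
    fix j assume j: "j \<in> K"
    have "inj_on f (Aj j) \<and> f ` Aj j \<subseteq> underS \<kappa> j" using f unfolding Aj_def inj_on_def by auto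
    then have "|Aj j| \<le>o |underS \<kappa> j|" using card_of_ordLeq[of "Aj j" "underS \<kappa> j"] by blast
    moreover have "|underS \<kappa> j| <o \<kappa>" using card_of_underS[OF card(1)] j K(1) by blast
    ultimately have "|Aj j| <o \<kappa>" by (rule ordLeq_ordLess_trans)
    then show "Aj j \<subseteq> dom M \<and> |Aj j| <o \<kappa>" using A unfolding Aj_def by blast
  qed
  have Kne: "K \<noteq> {}"
  proof -
    obtain a where "a \<in> Field \<kappa>" using card(2) by (metis finite.emptyI ex_in_conv)
    then show ?thesis using K(2) unfolding cofinal_def by blast
  qed
  have mx: "\<exists>k\<in>K. Aj k1 \<subseteq> Aj k \<and> Aj k2 \<subseteq> Aj k" if "k1 \<in> K" "k2 \<in> K" for k1 k2
  proof -
    have mono: "Aj a \<subseteq> Aj b" if "underS \<kappa> a \<subseteq> underS \<kappa> b" for a b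
      using that unfolding Aj_def by blast
    have "underS \<kappa> k1 \<subseteq> underS \<kappa> k2 \<or> underS \<kappa> k2 \<subseteq> underS \<kappa> k1"
      using max_underS[OF card(1), of k1 k2] that K(1) by blast
    then show ?thesis using mono that by blast
  qed
  have dir2: "\<forall>J. finite J \<and> J \<subseteq> K \<longrightarrow> (\<exists>i\<in>K. \<forall>j\<in>J. Aj j \<subseteq> Aj i)"
  proof (intro allI impI, elim conjE)
    fix J :: "'k set" assume "finite J" "J \<subseteq> K"
    then show "\<exists>i\<in>K. \<forall>j\<in>J. Aj j \<subseteq> Aj i"
    proof (induction J rule: finite_induct)
      case empty then show ?case using Kne by auto
    next
      case (insert x J)
      then obtain i where "i \<in> K" and iJ: "\<forall>j\<in>J. Aj j \<subseteq> Aj i" by auto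
      moreover have "x \<in> K" using insert.prems by simp
      ultimately obtain k where "k \<in> K" "Aj x \<subseteq> Aj k" "Aj i \<subseteq> Aj k" using mx by meson
      then show ?case using iJ by blast
    qed
  qed
  have dir: "\<forall>F. finite F \<and> F \<subseteq> A \<longrightarrow> (\<exists>j\<in>K. F \<subseteq> Aj j)"
  proof (intro allI impI, elim conjE)
    fix F assume "finite F" "F \<subseteq> A"
    then show "\<exists>j\<in>K. F \<subseteq> Aj j"
    proof (induction F rule: finite_induct)
      case empty then show ?case using Kne by auto
    next
      case (insert x F)
      then obtain i where i: "i \<in> K" "F \<subseteq> Aj i" by auto
      have "f x \<in> Field \<kappa>" using f insert.prems by auto
      then obtain k where k: "k \<in> K" "f x \<noteq> k" "(f x, k) \<in> \<kappa>" using K(2) unfolding cofinal_def by blast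
      then have "x \<in> Aj k" using insert.prems unfolding Aj_def underS_def by auto
      then show ?case using mx[OF i(1) k(1)] i by blast
    qed
  qed
  have code: "\<forall>F. finite F \<and> F \<subseteq> dom M \<longrightarrow> (\<exists>y\<in>dom M. \<forall>x\<in>dom M. eval M (asg x y) ps \<longleftrightarrow> x \<in> F)"
    using code_finite[OF ax] by blast
  show "\<exists>b. realizes M b p"
    by (rule realize_main[OF sat card(1) card(2) KI Aj dir dir2 code ps tp])
qed


lemma sentence_eval: "sentence L \<sigma> \<Longrightarrow> eval M e \<sigma> = eval M e' \<sigma>"
  unfolding sentence_def by (intro eval_cong) auto

definition fAll :: "nat \<Rightarrow> ('f,'r) fm \<Rightarrow> ('f,'r) fm" where "fAll v P = Neg (Ex v (Neg P))"
definition fOr :: "('f,'r) fm \<Rightarrow> ('f,'r) fm \<Rightarrow> ('f,'r) fm" where "fOr a b = Neg (Conj (Neg a) (Neg b))"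
definition fIff :: "('f,'r) fm \<Rightarrow> ('f,'r) fm \<Rightarrow> ('f,'r) fm" where
  "fIff a b = Conj (Neg (Conj a (Neg b))) (Neg (Conj b (Neg a)))"

lemma eval_fAll[simp]: "eval M e (fAll v P) = (\<forall>a\<in>dom M. eval M (e(v:=a)) P)"
  unfolding fAll_def by simp
lemma eval_fOr[simp]: "eval M e (fOr a b) = (eval M e a \<or> eval M e b)"
  unfolding fOr_def by simp
lemma eval_fIff[simp]: "eval M e (fIff a b) = (eval M e a \<longleftrightarrow> eval M e b)"
  unfolding fIff_def by auto
lemma FV_f[simp]: "FV (fAll v P) = FV P - {v}" "FV (fOr a b) = FV a \<union> FV b" "FV (fIff a b) = FV a \<union> FV b"
  unfolding fAll_def fOr_def fIff_def by auto
lemma fwf_f[simp]: "fwf L (fAll v P) = fwf L P" "fwf L (fOr a b) = (fwf L a \<and> fwf L b)" "fwf L (fIff a b) = (fwf L a \<and> fwf L b)"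
  unfolding fAll_def fOr_def fIff_def by auto

definition sig_empty :: "('g, 's option) fm" where
  "sig_empty = Ex 1 (Neg (Ex 0 (Rel None [Var 0, Var 1])))"

definition sig_add :: "('g, 's option) fm" where
  "sig_add = fAll 2 (fAll 3 (Ex 4 (fAll 5 (fIff (Rel None [Var 5, Var 4])
      (fOr (Rel None [Var 5, Var 3]) (Eq (Var 5) (Var 2)))))))"

lemma sig_empty_iff: "eval N e sig_empty = ax_empty N (Rel None [Var 0, Var 1])"
  unfolding sig_empty_def ax_empty_def by (simp add: asg_def)

lemma sig_add_iff: "eval N e sig_add = ax_add N (Rel None [Var 0, Var 1])"
  unfolding sig_add_def ax_add_def by (simp add: asg_def)

lemma sent_sigs: "sentence (expand_lang L) sig_empty" "sentence (expand_lang L) sig_add"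
  unfolding sentence_def sig_empty_def sig_add_def expand_lang_def by auto

lemma part2:
  fixes L :: "('g, 's) lang" and M :: "('b, 'g, 's) struct" and u :: "'b \<Rightarrow> 'b set"
  assumes st: "is_struct L M" and inf: "infinite (dom M)"
    and ub: "\<forall>b\<in>dom M. finite (u b) \<and> u b \<subseteq> dom M"
    and allF: "{F. finite F \<and> F \<subseteq> dom M} \<subseteq> u ` dom M"
  shows "let L' = expand_lang L; MR = expand M u; T' = Th L' MR;
             R = (Rel None [Var 0, Var 1] :: ('g, 's option) fm)
         in complete_theory TYPE('b) L' T' \<and>
            (\<forall>N :: ('b, 'g, 's option) struct. is_model L' N T' \<longrightarrow> ax_empty N R) \<and>
            (\<forall>N :: ('b, 'g, 's option) struct. is_model L' N T' \<longrightarrow> ax_add N R) \<and>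
            (\<exists>N :: ('b, 'g, 's option) struct. independent L' N T')"
proof -
  define L' where "L' = expand_lang L"
  define MR where "MR = expand M u"
  define T' where "T' = Th L' MR"
  define R where "R = (Rel None [Var 0, Var 1] :: ('g, 's option) fm)"
  have domMR: "dom MR = dom M" unfolding MR_def expand_def by simp
  have rlMR: "rl MR None [x, y] = (x \<in> u y)" for x y unfolding MR_def expand_def by simp
  have getF: "\<exists>y\<in>dom M. u y = F" if "finite F" "F \<subseteq> dom M" for F
    using allF that by blast
  have strMR: "is_struct L' MR"
    using st inf unfolding is_struct_def L'_def MR_def expand_lang_def expand_def by auto
  have modMR: "is_model L' MR T'"
    using strMR unfolding is_model_def T'_def Th_def by auto
  have comp: "complete_theory TYPE('b) L' T'"
    unfolding complete_theory_def
  proof (intro conjI allI impI)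
    show "\<forall>\<sigma>\<in>T'. sentence L' \<sigma>" unfolding T'_def Th_def by auto
    show "\<exists>M :: ('b, 'g, 's option) struct. is_model L' M T'" using modMR by blast
  next
    fix \<sigma> assume s: "sentence L' \<sigma>"
    then have sn: "sentence L' (Neg \<sigma>)" unfolding sentence_def by simp
    show "\<sigma> \<in> T' \<or> Neg \<sigma> \<in> T'"
    proof (cases "models MR \<sigma>")
      case True then show ?thesis using s unfolding T'_def Th_def by auto
    next
      case False
      then obtain e where "\<not> eval MR e \<sigma>" unfolding models_def by auto
      then have "models MR (Neg \<sigma>)" using sentence_eval[OF s, of MR e] unfolding models_def by auto
      then show ?thesis using sn unfolding T'_def Th_def by auto
    qed
  qed
  have inT: "\<sigma> \<in> T'" if "sentence L' \<sigma>" "models MR \<sigma>" for \<sigma>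
    using that unfolding T'_def Th_def by auto
  have evR: "eval MR (asg a b) R = (a \<in> u b)" for a b
    unfolding R_def by (simp add: asg_def rlMR)
  have e1: "ax_empty MR R"
  proof -
    obtain y where "y \<in> dom M" "u y = {}" using getF[of "{}"] by auto
    then show ?thesis unfolding ax_empty_def using domMR evR by auto
  qed
  have e2: "ax_add MR R"
    unfolding ax_add_def
  proof (intro ballI)
    fix x y assume xy: "x \<in> dom MR" "y \<in> dom MR"
    then have "finite (insert x (u y)) \<and> insert x (u y) \<subseteq> dom M" using ub domMR by auto
    then obtain y1 where "y1 \<in> dom M" "u y1 = insert x (u y)" using getF[of "insert x (u y)"] by blast
    then show "\<exists>y1\<in>dom MR. \<forall>x1\<in>dom MR. eval MR (asg x1 y1) R = (eval MR (asg x1 y) R \<or> x1 = x)"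
      unfolding evR using domMR by auto
  qed
  have "models MR sig_empty" using e1 sig_empty_iff unfolding R_def models_def by blast
  then have "sig_empty \<in> T'" using inT sent_sigs(1) unfolding L'_def by blast
  then have A1: "\<forall>N :: ('b, 'g, 's option) struct. is_model L' N T' \<longrightarrow> ax_empty N R"
    using sig_empty_iff unfolding is_model_def models_def R_def by blast
  have "models MR sig_add" using e2 sig_add_iff unfolding R_def models_def by blast
  then have "sig_add \<in> T'" using inT sent_sigs(2) unfolding L'_def by blast
  then have A2: "\<forall>N :: ('b, 'g, 's option) struct. is_model L' N T' \<longrightarrow> ax_add N R"
    using sig_add_iff unfolding is_model_def models_def R_def by blast
  obtain g :: "nat \<Rightarrow> 'b" where g: "inj g" "range g \<subseteq> dom M"
    using infinite_countable_subset[OF inf] by blast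
  have "has_IP L' MR R [0] [1]"
    unfolding has_IP_def
  proof (intro conjI allI)
    show "fwf L' R" unfolding R_def L'_def expand_lang_def by simp
    show "distinct ([0::nat] @ [1])" by simp
    show "FV R \<subseteq> set ([0] @ [1])" unfolding R_def by auto
    fix n
    have P: "\<forall>w \<subseteq> {..<n}. \<exists>b :: nat \<Rightarrow> 'b. (\<forall>j. b j \<in> dom MR) \<and>
           (\<forall>l<n. eval MR (\<lambda>v. if v \<in> set [0] then g l else b v) R \<longleftrightarrow> l \<in> w)"
    proof (intro allI impI)
      fix w assume w: "w \<subseteq> {..<n}"
      then have "finite (g ` w)" using finite_subset by blast
      moreover have "g ` w \<subseteq> dom M" using g by auto
      ultimately obtain y where y: "y \<in> dom M" "u y = g ` w" using getF by blast
      have "(\<forall>j. y \<in> dom MR) \<and>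
           (\<forall>l<n. eval MR (\<lambda>v. if v \<in> set [0] then g l else y) R \<longleftrightarrow> l \<in> w)"
        unfolding R_def using rlMR y g(1) domMR by (auto simp: inj_image_mem_iff)
      then show "\<exists>b :: nat \<Rightarrow> 'b. (\<forall>j. b j \<in> dom MR) \<and>
           (\<forall>l<n. eval MR (\<lambda>v. if v \<in> set [0] then g l else b v) R \<longleftrightarrow> l \<in> w)"
        by (intro exI[where x="\<lambda>j. y"]) simp
    qed
    have "\<forall>l<n. \<forall>j. g l \<in> dom MR" using g domMR by auto
    then show "\<exists>a :: nat \<Rightarrow> nat \<Rightarrow> 'b. (\<forall>l<n. \<forall>j. a l j \<in> dom MR) \<and>
        (\<forall>w \<subseteq> {..<n}. \<exists>b :: nat \<Rightarrow> 'b. (\<forall>j. b j \<in> dom MR) \<and>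
           (\<forall>l<n. eval MR (\<lambda>v. if v \<in> set [0] then a l v else b v) R \<longleftrightarrow> l \<in> w))"
      using P by (intro exI[where x="\<lambda>l j. g l"]) simp
  qed
  then have "independent L' MR T'" unfolding independent_def using modMR by blast
  then show ?thesis using comp A1 A2 unfolding L'_def MR_def T'_def R_def Let_def by blast
qed

theorem mainTheorem11:
  shows
  "(\<forall>(L :: ('f, 'r) lang) (T :: ('f, 'r) fm set) (\<phi> :: ('f, 'r) fm).
      complete_theory TYPE('a) L T \<and> fwf L \<phi> \<and> FV \<phi> \<subseteq> {0, 1} \<and>
      (\<forall>N :: ('a, 'f, 'r) struct. is_model L N T \<longrightarrow> ax_empty N \<phi>) \<and>
      (\<forall>N :: ('a, 'f, 'r) struct. is_model L N T \<longrightarrow> ax_add N \<phi>)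
    \<longrightarrow> (\<forall>(\<kappa> :: 'k rel) (M :: ('a, 'f, 'r) struct).
          singular_cardinal \<kappa> \<and> is_model L M T \<longrightarrow>
            (saturated L M \<kappa> \<longrightarrow> saturated L M (cardSuc \<kappa>)) \<and>
            \<not> (saturated L M \<kappa> \<and> \<not> saturated L M (cardSuc \<kappa>))))
   \<and>
   (\<forall>(L :: ('g, 's) lang) (M :: ('b, 'g, 's) struct) (u :: 'b \<Rightarrow> 'b set).
      is_struct L M \<and> infinite (dom M) \<and>
      (\<forall>b\<in>dom M. finite (u b) \<and> u b \<subseteq> dom M) \<and>
      {F. finite F \<and> F \<subseteq> dom M} \<subseteq> u ` dom M
    \<longrightarrow> (let L' = expand_lang L; MR = expand M u; T' = Th L' MR;
             R = (Rel None [Var 0, Var 1] :: ('g, 's option) fm)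
         in complete_theory TYPE('b) L' T' \<and>
            (\<forall>N :: ('b, 'g, 's option) struct. is_model L' N T' \<longrightarrow> ax_empty N R) \<and>
            (\<forall>N :: ('b, 'g, 's option) struct. is_model L' N T' \<longrightarrow> ax_add N R) \<and>
            (\<exists>N :: ('b, 'g, 's option) struct. independent L' N T')))"
proof (rule conjI)
  show "\<forall>(L :: ('f, 'r) lang) (T :: ('f, 'r) fm set) (\<phi> :: ('f, 'r) fm).
      complete_theory TYPE('a) L T \<and> fwf L \<phi> \<and> FV \<phi> \<subseteq> {0, 1} \<and>
      (\<forall>N :: ('a, 'f, 'r) struct. is_model L N T \<longrightarrow> ax_empty N \<phi>) \<and>
      (\<forall>N :: ('a, 'f, 'r) struct. is_model L N T \<longrightarrow> ax_add N \<phi>)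
    \<longrightarrow> (\<forall>(\<kappa> :: 'k rel) (M :: ('a, 'f, 'r) struct).
          singular_cardinal \<kappa> \<and> is_model L M T \<longrightarrow>
            (saturated L M \<kappa> \<longrightarrow> saturated L M (cardSuc \<kappa>)) \<and>
            \<not> (saturated L M \<kappa> \<and> \<not> saturated L M (cardSuc \<kappa>)))"
  proof (intro allI impI)
    fix L :: "('f, 'r) lang" and T :: "('f, 'r) fm set" and \<phi> :: "('f, 'r) fm"
      and \<kappa> :: "'k rel" and M :: "('a, 'f, 'r) struct"
    assume H: "complete_theory TYPE('a) L T \<and> fwf L \<phi> \<and> FV \<phi> \<subseteq> {0, 1} \<and>
      (\<forall>N :: ('a, 'f, 'r) struct. is_model L N T \<longrightarrow> ax_empty N \<phi>) \<and>
      (\<forall>N :: ('a, 'f, 'r) struct. is_model L N T \<longrightarrow> ax_add N \<phi>)"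
      and K: "singular_cardinal \<kappa> \<and> is_model L M T"
    have "saturated L M \<kappa> \<Longrightarrow> saturated L M (cardSuc \<kappa>)"
      using part1[of \<kappa> M \<phi> L] H K by blast
    then show "(saturated L M \<kappa> \<longrightarrow> saturated L M (cardSuc \<kappa>)) \<and>
            \<not> (saturated L M \<kappa> \<and> \<not> saturated L M (cardSuc \<kappa>))" by blast
  qed
next
  show "\<forall>(L :: ('g, 's) lang) (M :: ('b, 'g, 's) struct) (u :: 'b \<Rightarrow> 'b set).
      is_struct L M \<and> infinite (dom M) \<and>
      (\<forall>b\<in>dom M. finite (u b) \<and> u b \<subseteq> dom M) \<and>
      {F. finite F \<and> F \<subseteq> dom M} \<subseteq> u ` dom M
    \<longrightarrow> (let L' = expand_lang L; MR = expand M u; T' = Th L' MR;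
             R = (Rel None [Var 0, Var 1] :: ('g, 's option) fm)
         in complete_theory TYPE('b) L' T' \<and>
            (\<forall>N :: ('b, 'g, 's option) struct. is_model L' N T' \<longrightarrow> ax_empty N R) \<and>
            (\<forall>N :: ('b, 'g, 's option) struct. is_model L' N T' \<longrightarrow> ax_add N R) \<and>
            (\<exists>N :: ('b, 'g, 's option) struct. independent L' N T'))"
  proof (intro allI impI)
    fix L :: "('g, 's) lang" and M :: "('b, 'g, 's) struct" and u :: "'b \<Rightarrow> 'b set"
    assume "is_struct L M \<and> infinite (dom M) \<and>
      (\<forall>b\<in>dom M. finite (u b) \<and> u b \<subseteq> dom M) \<and>
      {F. finite F \<and> F \<subseteq> dom M} \<subseteq> u ` dom M"
    then show "let L' = expand_lang L; MR = expand M u; T' = Th L' MR;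
             R = (Rel None [Var 0, Var 1] :: ('g, 's option) fm)
         in complete_theory TYPE('b) L' T' \<and>
            (\<forall>N :: ('b, 'g, 's option) struct. is_model L' N T' \<longrightarrow> ax_empty N R) \<and>
            (\<forall>N :: ('b, 'g, 's option) struct. is_model L' N T' \<longrightarrow> ax_add N R) \<and>
            (\<exists>N :: ('b, 'g, 's option) struct. independent L' N T')"
      using part2[of L M u] by blast
  qed
qed

end
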